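(* Let $X$ be an absolutely continuous real random variable, symmetric and unimodal about $0$, whose cdf $F_X$ is $C^1$ with density $g=F_X'$, and let $\beta\in(0,1]$. Assume that $g(t+\lambda_t^\beta)g(t-\lambda_t^\beta)>0$ and $$g(t)\ge2\frac{g(t+\lambda_t^\beta)\,g(t-\lambda_t^\beta)}{g(t+\lambda_t^\beta)+g(t-\lambda_t^\beta)}\quad\text{for all }t\in\mathbb{R}.$$ Then $t\mapsto LD_S^\beta(t,F_X)$ is non-increasing on $t>0$ and non-decreasing on $t<0$.
   Context: $\lambda_t^\beta=\inf\{\lambda>0: F_X(t+\lambda)-F_X(t-\lambda)\ge\beta\}$ and $LD_S^\beta(t,F_X)=\frac{2}{\beta^2}\big(F_X(t+\lambda_t^\beta)-F_X(t)\big)\big(F_X(t)-F_X(t-\lambda_t^\beta)\big)$. Symmetric and unimodal about $0$ means $g(-s)=g(s)$ and $g$ is nonincreasing on $[0,\infty)$. *)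

theory Defs
  imports "HOL-Probability.Probability"
begin

definition lam :: "(real \<Rightarrow> real) \<Rightarrow> real \<Rightarrow> real \<Rightarrow> real" where
  "lam F \<beta> t = Inf {l. l > 0 \<and> F (t + l) - F (t - l) \<ge> \<beta>}"

definition LD_S :: "real \<Rightarrow> real \<Rightarrow> (real \<Rightarrow> real) \<Rightarrow> real" where
  "LD_S \<beta> t F = 2 / \<beta>^2 * (F (t + lam F \<beta> t) - F t) * (F t - F (t - lam F \<beta> t))"

end

theory Submission
  imports Defs
begin

lemma ld_alg:
  fixes A B \<beta> :: real
  assumes "\<beta> = A + B" "\<beta> \<noteq> 0"
  shows "2 / \<beta>^2 * A * B = (\<beta>^2 - (A - B)^2) / (2 * \<beta>^2)"
proof -
  have "\<beta>^2 - (A-B)^2 = 4*A*B" using assms(1) by (simp add: power2_eq_square algebra_simps)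
  then have "(\<beta>^2 - (A - B)^2) / (2 * \<beta>^2) = (4*A*B) / (2 * \<beta>^2)" by simp
  also have "\<dots> = 2 / \<beta>^2 * A * B" using assms(2) by (simp add: field_simps)
  finally show ?thesis by simp
qed

lemma abs_main:
  fixes F g :: "real \<Rightarrow> real" and \<beta> :: real
  assumes deriv: "\<And>x. (F has_real_derivative g x) (at x)"
    and Fmono: "\<And>x y. x \<le> y \<Longrightarrow> F x \<le> F y"
    and cont: "continuous_on UNIV g"
    and symm: "\<And>s. g (- s) = g s"
    and unimodal: "\<And>s u. 0 \<le> s \<Longrightarrow> s \<le> u \<Longrightarrow> g u \<le> g s"
    and beta: "0 < \<beta>" "\<beta> \<le> 1"
    and finite_lam: "\<And>t. \<exists>l>0. F (t + l) - F (t - l) \<ge> \<beta>"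
    and pos: "\<And>t. g (t + lam F \<beta> t) * g (t - lam F \<beta> t) > 0"
    and harm: "\<And>t. g t \<ge> 2 * (g (t + lam F \<beta> t) * g (t - lam F \<beta> t))
                    / (g (t + lam F \<beta> t) + g (t - lam F \<beta> t))"
  shows "(\<forall>s t. 0 < s \<and> s \<le> t \<longrightarrow> LD_S \<beta> t F \<le> LD_S \<beta> s F)
       \<and> (\<forall>s t. s \<le> t \<and> t < 0 \<longrightarrow> LD_S \<beta> s F \<le> LD_S \<beta> t F)"
proof -
  define L where "L = lam F \<beta>"
  have Fc: "\<And>x. isCont F x" using deriv DERIV_isCont by blast
  have gc: "\<And>x. isCont g x" using cont by (simp add: continuous_on_eq_continuous_at)
  have g_nonneg: "g x \<ge> 0" for x
  proof (rule ccontr)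
    assume "\<not> g x \<ge> 0"
    then obtain d where "d > 0" "\<forall>h>0. h < d \<longrightarrow> F x > F (x + h)"
      using DERIV_neg_dec_right[OF deriv[of x]] by force
    then have "F x > F (x + d/2)" by auto
    moreover have "F x \<le> F (x + d/2)" using Fmono \<open>d>0\<close> by auto
    ultimately show False by simp
  qed
  have L_nonneg: "L t \<ge> 0" for t
  proof -
    obtain l where "l > 0" "F (t + l) - F (t - l) \<ge> \<beta>" using finite_lam by blast
    then show ?thesis unfolding L_def lam_def
      by (intro cInf_greatest) auto
  qed
  have g_pos0: "g x > 0" if "x \<ge> 0" for x
  proof (rule ccontr)
    assume "\<not> g x > 0"
    then have "g x = 0" using g_nonneg[of x] by simp
    then have "g (x + L x) \<le> 0" using unimodal[of x "x + L x"] that L_nonneg[of x] by simp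
    then have "g (x + L x) = 0" using g_nonneg[of "x + L x"] by simp
    then show False using pos[of x] unfolding L_def by simp
  qed
  have g_pos: "g x > 0" for x
    using g_pos0[of x] g_pos0[of "-x"] symm[of x] by (cases "x \<ge> 0") auto
  have Fstrict: "F x < F y" if "x < y" for x y
    using DERIV_pos_imp_increasing[OF that] deriv g_pos by blast
  define H where "H t l = F (t + l) - F (t - l)" for t l
  have Hstrict: "H t l1 < H t l2" if "l1 < l2" for t l1 l2
    using Fstrict[of "t + l1" "t + l2"] Fstrict[of "t - l2" "t - l1"] that
    unfolding H_def by simp
  have Hle: "l1 \<le> l2" if "H t l1 \<le> H t l2" for t l1 l2
    using Hstrict[of l2 l1 t] that by force
  have Hmono: "H t l1 \<le> H t l2" if "l1 \<le> l2" for t l1 l2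
    using Hstrict[of l1 l2 t] that by (cases "l1 = l2") auto
  have L_char: "L t > 0 \<and> H t (L t) = \<beta>" for t
  proof -
    obtain l1 where l1: "l1 > 0" "F (t + l1) - F (t - l1) \<ge> \<beta>" using finite_lam by blast
    have "\<exists>x. 0 \<le> x \<and> x \<le> l1 \<and> H t x = \<beta>"
    proof (rule IVT)
      show "H t 0 \<le> \<beta>" using beta by (simp add: H_def)
      show "\<beta> \<le> H t l1" using l1 by (simp add: H_def)
      show "0 \<le> l1" using l1 by simp
      show "\<forall>x. 0 \<le> x \<and> x \<le> l1 \<longrightarrow> isCont (H t) x"
        unfolding H_def using Fc
        by (auto intro!: continuous_intros isCont_o2[OF _ Fc])
    qed
    then obtain ls where ls: "0 \<le> ls" "H t ls = \<beta>" by blast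
    have "ls \<noteq> 0" using ls beta by (auto simp: H_def)
    with ls have lsp: "ls > 0" by simp
    have "L t = ls" unfolding L_def lam_def
    proof (rule cInf_eq_minimum)
      show "ls \<in> {l. 0 < l \<and> \<beta> \<le> F (t + l) - F (t - l)}" using lsp ls by (simp add: H_def)
      fix x assume "x \<in> {l. 0 < l \<and> \<beta> \<le> F (t + l) - F (t - l)}"
      then have "H t ls \<le> H t x" using ls by (simp add: H_def)
      then show "ls \<le> x" by (rule Hle)
    qed
    then show ?thesis using lsp ls by simp
  qed
  have Hcont: "((\<lambda>t. H t l) \<longlongrightarrow> H t0 l) (at t0)" for t0 l
  proof -
    have "isCont (\<lambda>t. H t l) t0"
      unfolding H_def using Fc
      by (auto intro!: continuous_intros isCont_o2[OF _ Fc])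
    then show ?thesis by (simp add: isCont_def)
  qed
  have L_cont: "isCont L t0" for t0
    unfolding isCont_def
  proof (rule order_tendstoI)
    fix a assume a: "a < L t0"
    show "\<forall>\<^sub>F t in at t0. a < L t"
    proof (cases "a \<le> 0")
      case True
      have "\<forall>t. a < L t" using True L_char by (meson less_le_trans not_le)
      then show ?thesis by (simp add: always_eventually)
    next
      case False
      have "H t0 a < \<beta>" using Hstrict[OF a, of t0] L_char[of t0] by simp
      then have "\<forall>\<^sub>F t in at t0. H t a < \<beta>" using order_tendstoD(2)[OF Hcont] by blast
      then show ?thesis
      proof (rule eventually_mono)
        fix t assume "H t a < \<beta>"
        then have "H t a < H t (L t)" using L_char[of t] by simp
        then show "a < L t" using Hmono[of "L t" a t] by force
      qed
    qed
  next
    fix a assume a: "L t0 < a"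
    have "H t0 a > \<beta>" using Hstrict[OF a, of t0] L_char[of t0] by simp
    then have "\<forall>\<^sub>F t in at t0. H t a > \<beta>" using order_tendstoD(1)[OF Hcont] by blast
    then show "\<forall>\<^sub>F t in at t0. L t < a"
    proof (rule eventually_mono)
      fix t assume "H t a > \<beta>"
      then have "H t a > H t (L t)" using L_char[of t] by simp
      then show "L t < a" using Hmono[of a "L t" t] by force
    qed
  qed
  have L_deriv: "(L has_real_derivative (g (t - L t) - g (t + L t)) / (g (t + L t) + g (t - L t))) (at t)" for t
  proof -
    define a where "a = t + L t"
    define b where "b = t - L t"
    obtain c1 where c1: "\<forall>z. F z - F a = c1 z * (z - a)" "isCont c1 a" "c1 a = g a"
      using deriv[of a] unfolding CARAT_DERIV by blast
    obtain c2 where c2: "\<forall>z. F z - F b = c2 z * (z - b)" "isCont c2 b" "c2 b = g b"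
      using deriv[of b] unfolding CARAT_DERIV by blast
    define p where "p y = c1 (y + L y)" for y
    define q where "q y = c2 (y - L y)" for y
    define k where "k y = (q y - p y) / (p y + q y)" for y
    have pc: "isCont p t" unfolding p_def
      proof (rule isCont_o2[where f="\<lambda>y. y + L y" and a=t and g=c1])
      show "isCont (\<lambda>y. y + L y) t" by (intro continuous_intros L_cont)
      show "isCont c1 (t + L t)" using c1 by (simp add: a_def)
    qed
    have qc: "isCont q t" unfolding q_def
      proof (rule isCont_o2[where f="\<lambda>y. y - L y" and a=t and g=c2])
      show "isCont (\<lambda>y. y - L y) t" by (intro continuous_intros L_cont)
      show "isCont c2 (t - L t)" using c2 by (simp add: b_def)
    qed
    have pt: "p t = g a" "q t = g b" using c1 c2 by (auto simp: p_def q_def a_def b_def)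
    have Spos: "p t + q t > 0" using pt g_pos by (simp add: add_pos_pos)
    have kc: "isCont k t" unfolding k_def
      by (rule isCont_divide[OF isCont_diff[OF qc pc] isCont_add[OF pc qc]]) (use Spos in simp)
    have ev1: "\<forall>\<^sub>F y in at t. p y + q y > 0"
    proof -
      have "((\<lambda>y. p y + q y) \<longlongrightarrow> p t + q t) (at t)"
        using isCont_add[OF pc qc] by (simp add: isCont_def)
      from order_tendstoD(1)[OF this Spos] show ?thesis .
    qed
    have key: "(L y - L t) * (p y + q y) = (y - t) * (q y - p y)" for y
    proof -
      have e: "H y (L y) = H t (L t)" using L_char by simp
      have "F (y + L y) - F a = p y * ((y - t) + (L y - L t))"
        using c1(1)[rule_format, of "y + L y"] by (simp add: p_def a_def algebra_simps)
      moreover have "F (y - L y) - F b = q y * ((y - t) - (L y - L t))"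
        using c2(1)[rule_format, of "y - L y"] by (simp add: q_def b_def algebra_simps)
      ultimately have "p y * ((y - t) + (L y - L t)) = q y * ((y - t) - (L y - L t))"
        using e unfolding H_def a_def b_def by linarith
      then show ?thesis by (simp add: algebra_simps)
    qed
    have evk: "\<forall>\<^sub>F y in at t. k y = (L y - L t) / (y - t)"
    proof -
      have "\<forall>\<^sub>F y in at t. y \<noteq> t" by (simp add: eventually_at_filter)
      with ev1 show ?thesis
      proof (rule eventually_elim2)
        fix y assume y: "p y + q y > 0" "y \<noteq> t"
        show "k y = (L y - L t) / (y - t)"
          using key[of y] y unfolding k_def by (simp add: field_simps)
      qed
    qed
    have kt: "(k \<longlongrightarrow> k t) (at t)" using kc by (simp add: isCont_def)
    have "((\<lambda>y. (L y - L t) / (y - t)) \<longlongrightarrow> k t) (at t)"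
      by (rule Lim_transform_eventually[OF kt evk])
    moreover have "k t = (g (t - L t) - g (t + L t)) / (g (t + L t) + g (t - L t))"
      unfolding k_def pt a_def b_def by simp
    ultimately show ?thesis unfolding has_field_derivative_iff by simp
  qed
  define D where "D t = F (t + L t) + F (t - L t) - 2 * F t" for t
  have D_deriv: "\<exists>y. (D has_real_derivative y) (at t) \<and> y \<le> 0" for t
  proof -
    define ga gb lp where "ga = g (t + L t)" and "gb = g (t - L t)"
      and "lp = (g (t - L t) - g (t + L t)) / (g (t + L t) + g (t - L t))"
    have d1: "((\<lambda>t. F (t + L t)) has_real_derivative ga * (1 + lp)) (at t)"
      unfolding ga_def lp_def
      by (rule DERIV_chain2[OF deriv]) (rule DERIV_add[OF DERIV_ident L_deriv])
    have d2: "((\<lambda>t. F (t - L t)) has_real_derivative gb * (1 - lp)) (at t)"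
      unfolding gb_def lp_def
      by (rule DERIV_chain2[OF deriv]) (rule DERIV_diff[OF DERIV_ident L_deriv])
    have dD: "(D has_real_derivative ga * (1 + lp) + gb * (1 - lp) - 2 * g t) (at t)"
    proof -
      have "D = (\<lambda>t. F (t + L t) + F (t - L t) - 2 * F t)" by (rule ext) (simp add: D_def)
      then show ?thesis using DERIV_diff[OF DERIV_add[OF d1 d2] DERIV_cmult[OF deriv, of 2 t]] by simp
    qed
    have gap: "ga > 0" "gb > 0" using g_pos by (auto simp: ga_def gb_def)
    have "ga * (1 + lp) + gb * (1 - lp) = 4 * ga * gb / (ga + gb)"
    proof -
      have S: "ga + gb > 0" using gap by simp
      have e1: "1 + lp = 2 * gb / (ga + gb)" unfolding lp_def ga_def[symmetric] gb_def[symmetric]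
        using S by (simp add: field_simps)
      have e2: "1 - lp = 2 * ga / (ga + gb)" unfolding lp_def ga_def[symmetric] gb_def[symmetric]
        using S by (simp add: field_simps)
      have "ga * (1 + lp) + gb * (1 - lp) = (ga * (2 * gb) + gb * (2 * ga)) / (ga + gb)"
        unfolding e1 e2 by (simp add: add_divide_distrib)
      also have "\<dots> = 4 * ga * gb / (ga + gb)" by (simp add: algebra_simps)
      finally show ?thesis .
    qed
    moreover have "g t \<ge> 2 * (ga * gb) / (ga + gb)"
      using harm[of t] unfolding ga_def gb_def L_def by simp
    ultimately have "ga * (1 + lp) + gb * (1 - lp) - 2 * g t \<le> 0" by simp
    with dD show ?thesis by blast
  qed
  have Dmono: "D y \<le> D x" if "x \<le> y" for x y
    using DERIV_nonpos_imp_nonincreasing[OF that] D_deriv by blast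
  have D0: "D 0 = 0"
  proof -
    have "\<forall>x. ((\<lambda>x. F x + F (- x)) has_real_derivative 0) (at x)"
    proof
      fix x
      have "((\<lambda>x. F x + F (- x)) has_real_derivative g x + g (- x) * (- 1)) (at x)"
        by (rule DERIV_add[OF deriv DERIV_chain2[OF deriv DERIV_minus[OF DERIV_ident]]])
      then show "((\<lambda>x. F x + F (- x)) has_real_derivative 0) (at x)" using symm by simp
    qed
    then have "F (L 0) + F (- L 0) = F 0 + F (- 0)" by (rule DERIV_isconst_all)
    then show ?thesis unfolding D_def by simp
  qed
  have LD: "LD_S \<beta> t F = (\<beta>^2 - (D t)^2) / (2 * \<beta>^2)" for t
  proof -
    have hb: "\<beta> = (F (t + L t) - F t) + (F t - F (t - L t))" using L_char[of t] by (simp add: H_def)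
    have "LD_S \<beta> t F = 2 / \<beta>^2 * (F (t + L t) - F t) * (F t - F (t - L t))"
      unfolding LD_S_def L_def by simp
    also have "\<dots> = (\<beta>^2 - (D t)^2) / (2 * \<beta>^2)"
    proof -
      have "D t = (F (t + L t) - F t) - (F t - F (t - L t))" by (simp add: D_def)
      then show ?thesis using ld_alg[OF hb] beta by simp
    qed
    finally show ?thesis .
  qed
  have cmp: "LD_S \<beta> t F \<le> LD_S \<beta> s F" if "(D s)^2 \<le> (D t)^2" for s t
    unfolding LD using that beta by (simp add: divide_right_mono)
  show ?thesis
  proof (intro conjI allI impI)
    fix s t :: real assume st: "0 < s \<and> s \<le> t"
    then have "D t \<le> D s" "D s \<le> 0" using Dmono[of s t] Dmono[of 0 s] D0 by auto
    then have "(- D s)^2 \<le> (- D t)^2" by (intro power_mono) auto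
    then have "(D s)^2 \<le> (D t)^2" by simp
    then show "LD_S \<beta> t F \<le> LD_S \<beta> s F" by (rule cmp)
  next
    fix s t :: real assume st: "s \<le> t \<and> t < 0"
    then have "D t \<le> D s" "0 \<le> D t" using Dmono[of s t] Dmono[of t 0] D0 by auto
    then have "(D t)^2 \<le> (D s)^2" by (intro power_mono) auto
    then show "LD_S \<beta> s F \<le> LD_S \<beta> t F" by (rule cmp)
  qed
qed

theorem mainTheorem11:
  fixes M :: "'a measure" and X :: "'a \<Rightarrow> real" and g :: "real \<Rightarrow> real" and \<beta> :: real
  assumes "prob_space M"
    and "X \<in> borel_measurable M"
    and deriv: "\<And>x. (cdf (distr M borel X) has_real_derivative g x) (at x)"
    and cont: "continuous_on UNIV g"
    and symm: "\<And>s. g (- s) = g s"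
    and unimodal: "\<And>s u. 0 \<le> s \<Longrightarrow> s \<le> u \<Longrightarrow> g u \<le> g s"
    and beta: "0 < \<beta>" "\<beta> \<le> 1"
    and finite_lam: "\<And>t. \<exists>l>0. cdf (distr M borel X) (t + l) - cdf (distr M borel X) (t - l) \<ge> \<beta>"
    and pos: "\<And>t. g (t + lam (cdf (distr M borel X)) \<beta> t) * g (t - lam (cdf (distr M borel X)) \<beta> t) > 0"
    and harm: "\<And>t. g t \<ge> 2 * (g (t + lam (cdf (distr M borel X)) \<beta> t) * g (t - lam (cdf (distr M borel X)) \<beta> t))
                    / (g (t + lam (cdf (distr M borel X)) \<beta> t) + g (t - lam (cdf (distr M borel X)) \<beta> t))"
  shows "(\<forall>s t. 0 < s \<and> s \<le> t \<longrightarrow> LD_S \<beta> t (cdf (distr M borel X)) \<le> LD_S \<beta> s (cdf (distr M borel X)))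
       \<and> (\<forall>s t. s \<le> t \<and> t < 0 \<longrightarrow> LD_S \<beta> s (cdf (distr M borel X)) \<le> LD_S \<beta> t (cdf (distr M borel X)))"
proof (rule abs_main[OF deriv _ cont symm unimodal beta finite_lam pos harm])
  have "real_distribution (distr M borel X)"
    using assms(1,2) prob_space.real_distribution_distr by blast
  then show "\<And>x y. x \<le> y \<Longrightarrow> cdf (distr M borel X) x \<le> cdf (distr M borel X) y"
    using real_distribution.finite_borel_measure_M finite_borel_measure.cdf_nondecreasing by blast
qed

end
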